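(* Let $\alpha\in(0,1)\setminus\mathcal{A}$. For the BOACI procedure, almost surely the following holds: if $\frac1T\sum_{t=1}^T d(\boldsymbol q_t,\boldsymbol q_{\mathrm{unif}})\to0$ (the opponent is statistically $\{\boldsymbol q_{\mathrm{unif}}\}$-restricted), then $$\lim_{T\to\infty}\frac1T\sum_{t=1}^T m(a_t,b_t)=\big(r(\alpha),\ \mathrm{Leb}(C_\alpha)\big)=m^\star(\boldsymbol q_{\mathrm{unif}}).$$
   Context: Fix $n\ge1$, $L>0$ and calibration scores $s_{(1)}<\dots<s_{(n)}$ in $[0,L)$, with $s_{(0)}=0$, $s_{(n+1)}=L$. Let $\mathcal{A}=\{k/(n+1):k=0,\dots,n+1\}$, $\mathcal{B}=\{k/(n+1):k=1,\dots,n+1\}$, $\boldsymbol q_{\mathrm{unif}}$ the uniform distribution on $\mathcal{B}$. For $\alpha\in[0,1]$, $r(\alpha)=1-\lceil (n+1)(1-\alpha)\rceil/(n+1)$ (largest element of $\mathcal{A}$ not exceeding $\alpha$) and $\mathrm{Leb}(C_\alpha)=2s_{(\lceil (n+1)(1-\alpha)\rceil)}$. Payoff $m(a,b)=(\mathbf{1}_{b\le a},\mathrm{Leb}(C_a))$. $\mathrm{Quant}(\alpha,\boldsymbol q)=\max\{a\in\mathcal{A}:\sum_b q_b\mathbf{1}_{b\le a}\le\alpha\}$ and $m^\star(\boldsymbol q)=(\sum_b q_b\mathbf{1}_{b\le\mathrm{Quant}(\alpha,\boldsymbol q)},\ \mathrm{Leb}(C_{\mathrm{Quant}(\alpha,\boldsymbol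 q)}))$. Repeated game: at each round $t$ the opponent chooses $\boldsymbol q_t\in\Delta(\mathcal{B})$ based on the past and $b_t\sim\boldsymbol q_t$ independently of the learner's round-$t$ randomness given the past; $d$ is Euclidean distance. A (possibly randomized) forecaster outputting $\boldsymbol z_t\in\Delta(\mathcal{B})$ at each round from past observations is calibrated if for every Borel $G\subseteq\Delta(\mathcal{B})$ and every opponent strategy, $\frac1T\sum_{t\le T}\mathbf{1}_{\boldsymbol z_t\in G}(\boldsymbol\delta_{b_t}-\boldsymbol z_t)\to0$ a.s. BOACI: $a_1=\mathrm{Quant}(\alpha,\boldsymbol q_{\mathrm{unif}})$, and for $t\ge2$, $a_t=\mathrm{Quant}(\alpha,\boldsymbol z_t)$ where $\boldsymbol z_t$ is the output of a calibrated forecaster fed with $b_1,\dots,b_{t-1}$. *)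

theory Defs
  imports "HOL-Probability.Probability"
begin

text \<open>Distributions on B = {k/(n+1) : k = 1..n+1} are represented as vectors
  q :: nat => real indexed by k in {1..n+1} (q k = probability of k/(n+1)),
  and equal to 0 outside {1..n+1}.\<close>

definition Aset :: "nat \<Rightarrow> real set" where
  "Aset n = {real k / real (n + 1) | k. k \<le> n + 1}"

definition bval :: "nat \<Rightarrow> nat \<Rightarrow> real" where
  "bval n k = real k / real (n + 1)"

definition Bset :: "nat \<Rightarrow> real set" where
  "Bset n = bval n ` {1..n + 1}"

definition Delta :: "nat \<Rightarrow> (nat \<Rightarrow> real) set" where
  "Delta n = {q. (\<forall>k. 0 \<le> q k) \<and> (\<forall>k. k \<notin> {1..n + 1} \<longrightarrow> q k = 0)
                \<and> (\<Sum>k=1..n + 1. q k) = 1}"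

definition qunif :: "nat \<Rightarrow> nat \<Rightarrow> real" where
  "qunif n = (\<lambda>k. if k \<in> {1..n + 1} then 1 / real (n + 1) else 0)"

definition dirac_vec :: "nat \<Rightarrow> real \<Rightarrow> nat \<Rightarrow> real" where
  "dirac_vec n b = (\<lambda>k. if k \<in> {1..n + 1} \<and> bval n k = b then 1 else 0)"

definition eucl_d :: "nat \<Rightarrow> (nat \<Rightarrow> real) \<Rightarrow> (nat \<Rightarrow> real) \<Rightarrow> real" where
  "eucl_d n p q = sqrt (\<Sum>k=1..n + 1. (p k - q k)^2)"

definition cdf :: "nat \<Rightarrow> (nat \<Rightarrow> real) \<Rightarrow> real \<Rightarrow> real" where
  "cdf n q a = (\<Sum>k=1..n + 1. q k * (if bval n k \<le> a then 1 else 0))"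

definition Quant :: "nat \<Rightarrow> real \<Rightarrow> (nat \<Rightarrow> real) \<Rightarrow> real" where
  "Quant n \<alpha> q = Max {a \<in> Aset n. cdf n q a \<le> \<alpha>}"

definition rfun :: "nat \<Rightarrow> real \<Rightarrow> real" where
  "rfun n \<alpha> = 1 - real (nat \<lceil>real (n + 1) * (1 - \<alpha>)\<rceil>) / real (n + 1)"

definition LebC :: "nat \<Rightarrow> (nat \<Rightarrow> real) \<Rightarrow> real \<Rightarrow> real" where
  "LebC n s \<alpha> = 2 * s (nat \<lceil>real (n + 1) * (1 - \<alpha>)\<rceil>)"

definition payoff :: "nat \<Rightarrow> (nat \<Rightarrow> real) \<Rightarrow> real \<Rightarrow> real \<Rightarrow> real \<times> real" where
  "payoff n s a b = ((if b \<le> a then 1 else 0), LebC n s a)"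

definition mstar :: "nat \<Rightarrow> (nat \<Rightarrow> real) \<Rightarrow> real \<Rightarrow> (nat \<Rightarrow> real) \<Rightarrow> real \<times> real" where
  "mstar n s \<alpha> q = (cdf n q (Quant n \<alpha> q), LebC n s (Quant n \<alpha> q))"

definition boaci :: "nat \<Rightarrow> real \<Rightarrow> (nat \<Rightarrow> nat \<Rightarrow> real) \<Rightarrow> nat \<Rightarrow> real" where
  "boaci n \<alpha> z t = (if t \<le> 1 then Quant n \<alpha> (qunif n) else Quant n \<alpha> (z t))"

end

theory Submission
  imports Defs
begin


lemma sq_bracket: "\<exists>k::nat. k\<^sup>2 \<le> T \<and> T < (Suc k)\<^sup>2"
proof (induction T)
  case 0 then show ?case by (intro exI[of _ 0]) auto
next
  case (Suc T)
  then obtain k where k: "k\<^sup>2 \<le> T" "T < (Suc k)\<^sup>2" by blast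
  show ?case
  proof (cases "Suc T < (Suc k)\<^sup>2")
    case True then show ?thesis using k by (intro exI[of _ k]) auto
  next
    case False
    then have "Suc T = (Suc k)\<^sup>2" using k by linarith
    then show ?thesis by (intro exI[of _ "Suc k"]) (auto simp: power2_eq_square)
  qed
qed

lemma sum_tail_bound:
  fixes x :: "nat \<Rightarrow> real"
  assumes b: "\<And>t. \<bar>x t\<bar> \<le> 1" and "m \<le> T"
  shows "\<bar>(\<Sum>t=1..T. x t) - (\<Sum>t=1..m. x t)\<bar> \<le> real (T - m)"
proof -
  have "(\<Sum>t=1..T. x t) = (\<Sum>t=1..m. x t) + (\<Sum>t=m+1..m+(T-m). x t)"
    using sum.ub_add_nat[of 1 m x "T - m"] assms(2) by simp
  moreover have "\<bar>\<Sum>t=m+1..m+(T-m). x t\<bar> \<le> real (T - m)"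
  proof -
    have "\<bar>\<Sum>t=m+1..m+(T-m). x t\<bar> \<le> (\<Sum>t=m+1..m+(T-m). \<bar>x t\<bar>)" by (rule sum_abs)
    also have "\<dots> \<le> (\<Sum>t=m+1..m+(T-m). 1)" by (rule sum_mono) (use b in auto)
    finally show ?thesis by simp
  qed
  ultimately show ?thesis by simp
qed

lemma interp:
  fixes x :: "nat \<Rightarrow> real"
  assumes b: "\<And>t. \<bar>x t\<bar> \<le> 1"
    and lim: "(\<lambda>m. (\<Sum>t=1..(Suc m)\<^sup>2. x t) / real ((Suc m)\<^sup>2)) \<longlonglongrightarrow> 0"
  shows "(\<lambda>T. (1 / real T) * (\<Sum>t=1..T. x t)) \<longlonglongrightarrow> 0"
proof (rule LIMSEQ_I)
  fix r :: real assume r: "0 < r"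
  obtain N1 where N1: "\<And>m. m \<ge> N1 \<Longrightarrow> \<bar>(\<Sum>t=1..(Suc m)\<^sup>2. x t) / real ((Suc m)\<^sup>2)\<bar> < r/2"
    using LIMSEQ_D[OF lim, of "r/2"] r by auto
  obtain N2 :: nat where N2: "6 / r < real N2" using reals_Archimedean2 by blast
  define N where "N = max N1 N2"
  show "\<exists>no. \<forall>T\<ge>no. norm ((1 / real T) * (\<Sum>t=1..T. x t) - 0) < r"
  proof (intro exI[of _ "(Suc N)\<^sup>2"] allI impI)
    fix T assume T: "(Suc N)\<^sup>2 \<le> T"
    obtain k where k: "k\<^sup>2 \<le> T" "T < (Suc k)\<^sup>2" using sq_bracket by blast
    have "Suc N \<le> k"
    proof (rule ccontr)
      assume "\<not> Suc N \<le> k"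
      then have "Suc k \<le> Suc N" by simp
      then have "(Suc k)\<^sup>2 \<le> (Suc N)\<^sup>2" by (rule power_mono) simp
      then show False using T k by linarith
    qed
    then obtain m where m: "k = Suc m" "m \<ge> N" by (cases k) auto
    define S where "S = (\<lambda>T. \<Sum>t=1..T. x t)"
    have "(Suc m)\<^sup>2 \<le> T" using k m by simp
    then have Tpos: "real T \<ge> real ((Suc m)\<^sup>2)" by (simp only: of_nat_le_iff)
    have sqpos: "real ((Suc m)\<^sup>2) > 0" by simp
    have tail: "\<bar>S T - S ((Suc m)\<^sup>2)\<bar> \<le> real (T - (Suc m)\<^sup>2)"
      unfolding S_def by (rule sum_tail_bound[OF b]) (use k m in simp)
    have "T - (Suc m)\<^sup>2 \<le> 3 * Suc m"
      using k m by (simp add: power2_eq_square)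
    then have "real (T - (Suc m)\<^sup>2) \<le> 3 * real (Suc m)"
      by (metis of_nat_le_iff of_nat_mult of_nat_numeral)
    then have tail2: "\<bar>S T - S ((Suc m)\<^sup>2)\<bar> \<le> 3 * real (Suc m)"
      using tail by linarith
    have a: "\<bar>S ((Suc m)\<^sup>2) / real ((Suc m)\<^sup>2)\<bar> < r/2" using N1[of m] m N_def unfolding S_def by simp
    have "\<bar>S T / real T\<bar> \<le> \<bar>S ((Suc m)\<^sup>2)\<bar> / real T + \<bar>S T - S ((Suc m)\<^sup>2)\<bar> / real T"
      using Tpos sqpos by (simp add: add_divide_distrib[symmetric] abs_triangle_ineq4 divide_right_mono
          order_trans[OF abs_triangle_ineq])
    also have "\<dots> \<le> \<bar>S ((Suc m)\<^sup>2)\<bar> / real ((Suc m)\<^sup>2) + 3 * real (Suc m) / real ((Suc m)\<^sup>2)"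
      apply (intro add_mono frac_le)
      using Tpos sqpos tail2 by auto
    also have "3 * real (Suc m) / real ((Suc m)\<^sup>2) = 3 / real (Suc m)"
    proof -
      have h: "\<And>y::real. y \<noteq> 0 \<Longrightarrow> 3*y/y^2 = 3/y" by (simp add: power2_eq_square)
      show ?thesis using h[of "real (Suc m)"] by (simp only: of_nat_power)
    qed
    also have "3 / real (Suc m) < r/2"
    proof -
      have "real N2 \<le> real (Suc m)" using m N_def by simp
      then have "6 / r < real (Suc m)" using N2 by linarith
      then show ?thesis using r by (simp add: field_simps)
    qed
    finally have "\<bar>S T / real T\<bar> < r" using a by (simp only: abs_divide abs_of_nat) linarith
    then show "norm ((1 / real T) * (\<Sum>t=1..T. x t) - 0) < r" unfolding S_def by simp
  qed
qed



lemma slln_orth: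
  fixes X :: "nat \<Rightarrow> 'a \<Rightarrow> real" and M :: "'a measure"
  assumes P: "prob_space M"
    and meas[measurable]: "\<And>t. X t \<in> borel_measurable M"
    and bnd: "\<And>t \<omega>. \<omega> \<in> space M \<Longrightarrow> \<bar>X t \<omega>\<bar> \<le> 1"
    and orth: "\<And>s t. s < t \<Longrightarrow> (\<integral>\<omega>. X s \<omega> * X t \<omega> \<partial>M) = 0"
  shows "AE \<omega> in M. (\<lambda>T. (1 / real T) * (\<Sum>t=1..T. X t \<omega>)) \<longlonglongrightarrow> 0"
proof -
  interpret prob_space M by (rule P)
  have intX2: "integrable M (\<lambda>\<omega>. X s \<omega> * X t \<omega>)" for s t
  proof (rule integrable_const_bound[where B=1])
    show "AE x in M. norm (X s x * X t x) \<le> 1"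
      using bnd by (auto simp: abs_mult intro!: mult_le_one)
  qed simp
  have orth2: "(\<integral>\<omega>. X s \<omega> * X t \<omega> \<partial>M) = 0" if "s \<noteq> t" for s t
  proof (cases "s < t")
    case True then show ?thesis by (rule orth)
  next
    case False then have "t < s" using that by simp
    then show ?thesis using orth[of t s] by (simp add: mult.commute)
  qed
  have sq_le1: "(\<integral>\<omega>. X t \<omega> * X t \<omega> \<partial>M) \<le> 1" for t
  proof -
    have "(\<integral>\<omega>. X t \<omega> * X t \<omega> \<partial>M) \<le> (\<integral>\<omega>. 1 \<partial>M)"
      by (rule integral_mono[OF intX2]) (use bnd in \<open>auto intro: order_trans[OF eq_refl[OF abs_mult_self_eq[symmetric]] mult_le_one]\<close>)
    then show ?thesis by (simp add: prob_space)
  qed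
  define S where "S T \<omega> = (\<Sum>t=1..T. X t \<omega>)" for T \<omega>
  have S_meas[measurable]: "S T \<in> borel_measurable M" for T unfolding S_def by measurable
  have ES2: "(\<integral>\<omega>. (S T \<omega>)\<^sup>2 \<partial>M) \<le> real T" for T
  proof -
    have "(\<integral>\<omega>. (S T \<omega>)\<^sup>2 \<partial>M) = (\<integral>\<omega>. (\<Sum>s=1..T. \<Sum>t=1..T. X s \<omega> * X t \<omega>) \<partial>M)"
      unfolding S_def power2_eq_square sum_product by simp
    also have "\<dots> = (\<Sum>s=1..T. \<Sum>t=1..T. (\<integral>\<omega>. X s \<omega> * X t \<omega> \<partial>M))"
      by (simp add: intX2 integrable_sum)
    also have "\<dots> = (\<Sum>s=1..T. (\<integral>\<omega>. X s \<omega> * X s \<omega> \<partial>M))"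
    proof (rule sum.cong[OF refl])
      fix s assume s: "s \<in> {1..T}"
      have "(\<Sum>t=1..T. (\<integral>\<omega>. X s \<omega> * X t \<omega> \<partial>M)) =
            (\<Sum>t=1..T. (if s = t then (\<integral>\<omega>. X s \<omega> * X s \<omega> \<partial>M) else 0))"
        by (rule sum.cong) (auto simp: orth2)
      also have "\<dots> = (\<integral>\<omega>. X s \<omega> * X s \<omega> \<partial>M)" using s by simp
      finally show "(\<Sum>t=1..T. (\<integral>\<omega>. X s \<omega> * X t \<omega> \<partial>M)) = (\<integral>\<omega>. X s \<omega> * X s \<omega> \<partial>M)" .
    qed
    also have "\<dots> \<le> (\<Sum>s=1..T. 1)" by (rule sum_mono) (rule sq_le1)
    finally show ?thesis by simp
  qed
  define Y where "Y m \<omega> = (S ((Suc m)\<^sup>2) \<omega> / real ((Suc m)\<^sup>2))\<^sup>2" for m \<omega>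
  have Y_meas[measurable]: "Y m \<in> borel_measurable M" for m unfolding Y_def by measurable
  have Y_nn: "0 \<le> Y m \<omega>" for m \<omega> unfolding Y_def by simp
  have Sbnd: "\<bar>S T \<omega>\<bar> \<le> real T" if "\<omega> \<in> space M" for T \<omega>
  proof -
    have "\<bar>S T \<omega>\<bar> \<le> (\<Sum>t=1..T. \<bar>X t \<omega>\<bar>)" unfolding S_def by (rule sum_abs)
    also have "\<dots> \<le> (\<Sum>t=1..T. 1)" by (rule sum_mono) (use bnd that in auto)
    finally show ?thesis by simp
  qed
  have intS2: "integrable M (\<lambda>\<omega>. (S T \<omega>)\<^sup>2)" for T
  proof (rule integrable_const_bound[where B="(real T)\<^sup>2"])
    show "AE x in M. norm ((S T x)\<^sup>2) \<le> (real T)\<^sup>2"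
      using Sbnd by (auto simp: abs_le_square_iff[symmetric])
  qed simp
  have EY: "(\<integral>\<omega>. Y m \<omega> \<partial>M) \<le> 1 / (real (Suc m))\<^sup>2" for m
  proof -
    define c where "c = real ((Suc m)\<^sup>2)"
    have c: "c > 0" unfolding c_def by simp
    have "(\<integral>\<omega>. Y m \<omega> \<partial>M) = (\<integral>\<omega>. (S ((Suc m)\<^sup>2) \<omega>)\<^sup>2 \<partial>M) / c\<^sup>2"
      unfolding Y_def c_def[symmetric] by (simp add: power_divide)
    also have "\<dots> \<le> c / c\<^sup>2"
      using ES2[of "(Suc m)\<^sup>2"] c unfolding c_def by (intro divide_right_mono) auto
    also have "c / c\<^sup>2 = 1 / (real (Suc m))\<^sup>2"
    proof -
      have "c / c\<^sup>2 = 1 / c" using c by (simp add: power2_eq_square)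
      then show ?thesis unfolding c_def of_nat_power .
    qed
    finally show ?thesis .
  qed
  have intY: "integrable M (Y m)" for m
    unfolding Y_def using intS2 by (simp add: power_divide)
  have nnY: "(\<integral>\<^sup>+\<omega>. ennreal (Y m \<omega>) \<partial>M) \<le> ennreal (1 / (real (Suc m))\<^sup>2)" for m
    using nn_integral_eq_integral[OF intY] Y_nn EY by (simp add: ennreal_leI)
  have summ: "summable (\<lambda>m. 1 / (real (Suc m))\<^sup>2)"
  proof -
    have "summable (\<lambda>n. inverse (real n ^ 2))" by (rule inverse_power_summable) (rule order_refl)
    then have "summable (\<lambda>n. 1 / (real n)\<^sup>2)" by (simp only: inverse_eq_divide)
    then show ?thesis by (subst summable_Suc_iff)
  qed
  have "(\<integral>\<^sup>+\<omega>. (\<Sum>m. ennreal (Y m \<omega>)) \<partial>M) = (\<Sum>m. (\<integral>\<^sup>+\<omega>. ennreal (Y m \<omega>) \<partial>M))"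
    by (rule nn_integral_suminf) measurable
  also have "\<dots> \<le> (\<Sum>m. ennreal (1 / (real (Suc m))\<^sup>2))"
    by (rule suminf_le[where f="\<lambda>m. (\<integral>\<^sup>+\<omega>. ennreal (Y m \<omega>) \<partial>M)" and g="\<lambda>m. ennreal (1 / (real (Suc m))\<^sup>2)", OF nnY summableI summableI])
  also have "\<dots> < \<infinity>"
  proof -
    have "(\<Sum>m. ennreal (1 / (real (Suc m))\<^sup>2)) \<noteq> top"
      by (rule ennreal_suminf_neq_top[OF summ]) simp
    then show ?thesis unfolding infinity_ennreal_def by (simp only: less_top)
  qed
  finally have "(\<integral>\<^sup>+\<omega>. (\<Sum>m. ennreal (Y m \<omega>)) \<partial>M) \<noteq> \<infinity>" by simp
  then have "AE \<omega> in M. (\<Sum>m. ennreal (Y m \<omega>)) \<noteq> \<infinity>"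
    by (intro nn_integral_PInf_AE) measurable
  then show ?thesis
  proof (rule AE_mp, intro AE_I2 impI)
    fix \<omega> assume \<omega>: "\<omega> \<in> space M" and fin: "(\<Sum>m. ennreal (Y m \<omega>)) \<noteq> \<infinity>"
    have "summable (\<lambda>m. Y m \<omega>)" using fin Y_nn by (intro summable_suminf_not_top) auto
    then have "(\<lambda>m. Y m \<omega>) \<longlonglongrightarrow> 0" by (rule summable_LIMSEQ_zero)
    then have "(\<lambda>m. sqrt (Y m \<omega>)) \<longlonglongrightarrow> sqrt 0" by (rule tendsto_real_sqrt)
    then have "(\<lambda>m. \<bar>S ((Suc m)\<^sup>2) \<omega> / real ((Suc m)\<^sup>2)\<bar>) \<longlonglongrightarrow> 0" unfolding Y_def by simp
    then have lim: "(\<lambda>m. S ((Suc m)\<^sup>2) \<omega> / real ((Suc m)\<^sup>2)) \<longlonglongrightarrow> 0"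
      by (rule tendsto_rabs_zero_cancel)
    show "(\<lambda>T. (1 / real T) * (\<Sum>t=1..T. X t \<omega>)) \<longlonglongrightarrow> 0"
      by (rule interp[where x="\<lambda>t. X t \<omega>"]) (use bnd \<omega> lim in \<open>auto simp: S_def\<close>)
  qed
qed



lemma Delta_bounds:
  assumes "p \<in> Delta n"
  shows "0 \<le> p k" "p k \<le> 1"
proof -
  show "0 \<le> p k" using assms unfolding Delta_def by auto
  show "p k \<le> 1"
  proof (cases "k \<in> {1..n+1}")
    case True
    have "p k \<le> (\<Sum>j=1..n+1. p j)"
      by (rule member_le_sum) (use assms True in \<open>auto simp: Delta_def\<close>)
    then show ?thesis using assms unfolding Delta_def by simp
  next
    case False then show ?thesis using assms unfolding Delta_def by auto
  qed
qed

lemma sets_G_mono: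
  assumes "\<forall>t. sets (G t) \<subseteq> sets (G (Suc t))" "s \<le> t"
  shows "sets (G s) \<subseteq> sets (G t)"
  using lift_Suc_mono_le[of "\<lambda>t. sets (G t)", OF _ assms(2)] assms(1) by blast

lemma meas_G_mono:
  assumes "\<forall>t. subalgebra M (G t)" "\<forall>t. sets (G t) \<subseteq> sets (G (Suc t))" "s \<le> t"
    and "f \<in> borel_measurable (G s)"
  shows "f \<in> borel_measurable (G t)"
proof (rule measurable_from_subalg[OF _ assms(4)])
  show "subalgebra (G t) (G s)"
    using assms(1) sets_G_mono[OF assms(2,3)] unfolding subalgebra_def by auto
qed

lemma dirac_vec_eq:
  assumes "k \<in> {1..n+1}"
  shows "dirac_vec n x k = indicator {y. x = bval n k} y"
  using assms unfolding dirac_vec_def by (auto simp: indicator_def)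

lemma cond_law:
  fixes M F :: "'a measure" and f :: "'a \<Rightarrow> real"
  assumes P: "prob_space M" and sub: "subalgebra M F"
    and A: "A \<in> sets M"
    and law: "\<forall>E\<in>sets F. measure M (A \<inter> E) = (LINT \<omega>:E|M. g \<omega>)"
    and g_meas: "g \<in> borel_measurable F" and g_bnd: "\<And>\<omega>. \<omega> \<in> space M \<Longrightarrow> \<bar>g \<omega>\<bar> \<le> 1"
    and h_meas: "h \<in> borel_measurable F" and h_bnd: "\<And>\<omega>. \<omega> \<in> space M \<Longrightarrow> \<bar>h \<omega>\<bar> \<le> 1"
  shows "(\<integral>\<omega>. h \<omega> * indicator A \<omega> \<partial>M) = (\<integral>\<omega>. h \<omega> * g \<omega> \<partial>M)"
proof -
  interpret prob_space M by (rule P)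
  interpret finite_measure_subalgebra M F
    by unfold_locales (rule sub)
  have gM[measurable]: "g \<in> borel_measurable M" by (rule measurable_from_subalg[OF sub g_meas])
  have hM[measurable]: "h \<in> borel_measurable M" by (rule measurable_from_subalg[OF sub h_meas])
  have [measurable]: "A \<in> sets M" by (rule A)
  have intg: "integrable M g"
    by (rule integrable_const_bound[where B=1]) (use g_bnd in auto)
  have intA: "integrable M (indicator A :: 'a \<Rightarrow> real)"
    by (rule integrable_const_bound[where B=1]) (auto simp: indicator_def)
  have "AE x in M. real_cond_exp M F (indicator A) x = g x"
  proof (rule real_cond_exp_charact)
    fix E assume E: "E \<in> sets F"
    then have EM: "E \<in> sets M" using sub unfolding subalgebra_def by auto
    have "(\<integral>x\<in>E. indicator A x \<partial>M) = (\<integral>x. indicator (A \<inter> E) x \<partial>M)"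
      unfolding set_lebesgue_integral_def
      by (rule Bochner_Integration.integral_cong) (auto simp: indicator_def)
    also have "\<dots> = measure M (A \<inter> E)" using A EM by simp
    also have "\<dots> = (\<integral>x\<in>E. g x \<partial>M)" using law E by simp
    finally show "(\<integral>x\<in>E. indicator A x \<partial>M) = (\<integral>x\<in>E. g x \<partial>M)" .
  qed (use intg intA g_meas in auto)
  then have "(\<integral>\<omega>. h \<omega> * g \<omega> \<partial>M) = (\<integral>\<omega>. h \<omega> * real_cond_exp M F (indicator A) \<omega> \<partial>M)"
    by (intro integral_cong_AE) auto
  also have "\<dots> = (\<integral>\<omega>. h \<omega> * indicator A \<omega> \<partial>M)"
  proof (rule real_cond_exp_intg(2))
    show "integrable M (\<lambda>x. h x * indicator A x)"
      by (rule integrable_const_bound[where B=1]) (use h_bnd in \<open>auto simp: indicator_def\<close>)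
  qed (use h_meas in auto)
  finally show ?thesis by simp
qed



lemma orth_X:
  fixes M :: "'w measure" and G :: "nat \<Rightarrow> 'w measure"
    and q z :: "nat \<Rightarrow> 'w \<Rightarrow> nat \<Rightarrow> real" and b :: "nat \<Rightarrow> 'w \<Rightarrow> real"
  assumes P: "prob_space M"
    and G_sub: "\<forall>t. subalgebra M (G t)"
    and G_mono: "\<forall>t. sets (G t) \<subseteq> sets (G (Suc t))"
    and q_meas: "\<forall>t\<ge>1. q t \<in> G t \<rightarrow>\<^sub>M borel"
    and z_meas: "\<forall>t\<ge>1. z t \<in> G t \<rightarrow>\<^sub>M borel"
    and b_meas: "\<forall>t\<ge>1. b t \<in> G (Suc t) \<rightarrow>\<^sub>M borel"
    and q_Delta: "\<forall>t\<ge>1. \<forall>\<omega>\<in>space M. q t \<omega> \<in> Delta n"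
    and b_law: "\<forall>t\<ge>1. \<forall>k\<in>{1..n + 1}. \<forall>E\<in>sets (G t).
        measure M ({\<omega>\<in>space M. b t \<omega> = bval n k} \<inter> E) = (LINT \<omega>:E|M. q t \<omega> k)"
    and k: "k \<in> {1..n+1}" and H: "H \<in> sets (borel :: (nat \<Rightarrow> real) measure)"
  defines "X \<equiv> \<lambda>t \<omega>. if 1 \<le> t then indicator H (z t \<omega>) * (dirac_vec n (b t \<omega>) k - q t \<omega> k) else 0"
  shows X_measG: "\<And>t. X t \<in> borel_measurable (G (Suc t))"
    and X_meas: "\<And>t. X t \<in> borel_measurable M"
    and X_bnd: "\<And>t \<omega>. \<omega> \<in> space M \<Longrightarrow> \<bar>X t \<omega>\<bar> \<le> 1"
    and X_orth: "\<And>s t. s < t \<Longrightarrow> (\<integral>\<omega>. X s \<omega> * X t \<omega> \<partial>M) = 0"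
proof -
  have dv: "(\<lambda>\<omega>. dirac_vec n (b t \<omega>) k) = (\<lambda>\<omega>. if b t \<omega> = bval n k then 1 else 0)" for t
    using k unfolding dirac_vec_def by auto
  have indm: "(\<lambda>\<omega>. indicator H (z t \<omega>) :: real) \<in> borel_measurable (G t)" if "1 \<le> t" for t
    using measurable_compose[OF z_meas[rule_format, OF that] borel_measurable_indicator[OF H]]
    by (simp add: comp_def)
  have qk: "(\<lambda>\<omega>. q t \<omega> k) \<in> borel_measurable (G t)" if "1 \<le> t" for t
    using q_meas that by (auto intro: measurable_product_then_coordinatewise)
  have dvm: "(\<lambda>\<omega>. dirac_vec n (b t \<omega>) k) \<in> borel_measurable (G (Suc t))" if "1 \<le> t" for t
  proof -
    have [measurable]: "b t \<in> borel_measurable (G (Suc t))" using b_meas that by auto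
    show ?thesis unfolding dv by measurable
  qed
  show XG: "X t \<in> borel_measurable (G (Suc t))" for t
  proof (cases "1 \<le> t")
    case True
    have [measurable]: "(\<lambda>\<omega>. indicator H (z t \<omega>) :: real) \<in> borel_measurable (G (Suc t))"
      by (rule meas_G_mono[OF G_sub G_mono _ indm[OF True]]) simp
    have [measurable]: "(\<lambda>\<omega>. q t \<omega> k) \<in> borel_measurable (G (Suc t))"
      by (rule meas_G_mono[OF G_sub G_mono _ qk[OF True]]) simp
    have [measurable]: "(\<lambda>\<omega>. dirac_vec n (b t \<omega>) k) \<in> borel_measurable (G (Suc t))" by (rule dvm[OF True])
    show ?thesis unfolding X_def using True by simp
  next
    case False then show ?thesis unfolding X_def by simp
  qed
  show XM: "X t \<in> borel_measurable M" for t
    by (rule measurable_from_subalg[OF _ XG]) (use G_sub in auto)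
  show Xb: "\<bar>X t \<omega>\<bar> \<le> 1" if "\<omega> \<in> space M" for t \<omega>
  proof (cases "1 \<le> t")
    case True
    have "0 \<le> q t \<omega> k" "q t \<omega> k \<le> 1" using Delta_bounds q_Delta True that by blast+
    moreover have "dirac_vec n (b t \<omega>) k \<in> {0,1}" unfolding dirac_vec_def by auto
    ultimately show ?thesis unfolding X_def using True by (auto simp: indicator_def)
  next
    case False then show ?thesis unfolding X_def by simp
  qed
  show "(\<integral>\<omega>. X s \<omega> * X t \<omega> \<partial>M) = 0" if st: "s < t" for s t
  proof (cases "1 \<le> s")
    case False then show ?thesis unfolding X_def by simp
  next
    case True
    then have t1: "1 \<le> t" using st by simp
    define A where "A = {\<omega>\<in>space M. b t \<omega> = bval n k}"
    define h where "h \<omega> = X s \<omega> * indicator H (z t \<omega>)" for \<omega>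
    have bM[measurable]: "b t \<in> borel_measurable M"
      by (rule measurable_from_subalg[OF _ b_meas[rule_format, OF t1]]) (use G_sub in auto)
    have AM: "A \<in> sets M" unfolding A_def by measurable
    have hG: "h \<in> borel_measurable (G t)"
    proof -
      have "X s \<in> borel_measurable (G t)"
        by (rule meas_G_mono[OF G_sub G_mono _ XG]) (use st in simp)
      then show ?thesis unfolding h_def using indm[OF t1] by measurable
    qed
    have qG: "(\<lambda>\<omega>. q t \<omega> k) \<in> borel_measurable (G t)" by (rule qk[OF t1])
    have qb: "\<bar>q t \<omega> k\<bar> \<le> 1" if "\<omega> \<in> space M" for \<omega>
      using Delta_bounds[of "q t \<omega>" n k] q_Delta t1 that by auto
    have hb: "\<bar>h \<omega>\<bar> \<le> 1" if "\<omega> \<in> space M" for \<omega>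
      using Xb[OF that, of s] unfolding h_def by (auto simp: indicator_def)
    have law: "\<forall>E\<in>sets (G t). measure M (A \<inter> E) = (LINT \<omega>:E|M. q t \<omega> k)"
      using b_law t1 k unfolding A_def by auto
    have sub: "subalgebra M (G t)" using G_sub by auto
    have key: "(\<integral>\<omega>. h \<omega> * indicator A \<omega> \<partial>M) = (\<integral>\<omega>. h \<omega> * q t \<omega> k \<partial>M)"
      by (rule cond_law[OF P sub AM law qG qb hG hb])
    have hM[measurable]: "h \<in> borel_measurable M" by (rule measurable_from_subalg[OF sub hG])
    have qM[measurable]: "(\<lambda>\<omega>. q t \<omega> k) \<in> borel_measurable M" by (rule measurable_from_subalg[OF sub qG])
    interpret prob_space M by (rule P)
    have i1: "integrable M (\<lambda>\<omega>. h \<omega> * indicator A \<omega>)"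
      by (rule integrable_const_bound[where B=1]) (use hb AM in \<open>auto simp: indicator_def\<close>)
    have i2: "integrable M (\<lambda>\<omega>. h \<omega> * q t \<omega> k)"
      by (rule integrable_const_bound[where B=1])
        (use hb qb in \<open>auto simp: abs_mult intro!: mult_le_one\<close>)
    have "(\<integral>\<omega>. X s \<omega> * X t \<omega> \<partial>M) = (\<integral>\<omega>. h \<omega> * indicator A \<omega> - h \<omega> * q t \<omega> k \<partial>M)"
    proof (rule Bochner_Integration.integral_cong[OF refl])
      fix \<omega> assume "\<omega> \<in> space M"
      then show "X s \<omega> * X t \<omega> = h \<omega> * indicator A \<omega> - h \<omega> * q t \<omega> k"
        unfolding h_def A_def X_def using t1 k by (simp add: dirac_vec_def indicator_def algebra_simps)
    qed
    also have "\<dots> = 0" using key i1 i2 by simp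
    finally show ?thesis .
  qed
qed



lemma bval_le_iff: "bval n k \<le> real j / real (n+1) \<longleftrightarrow> k \<le> j"
  unfolding bval_def by (simp add: divide_le_cancel)

lemma cdf_grid:
  assumes "j \<le> n+1"
  shows "cdf n p (real j / real (n+1)) = (\<Sum>k=1..j. p k)"
proof -
  have "cdf n p (real j / real (n+1)) = (\<Sum>k\<in>{1..n+1}. if k \<le> j then p k else 0)"
    unfolding cdf_def by (rule sum.cong) (auto simp: bval_def divide_le_cancel)
  also have "\<dots> = (\<Sum>k\<in>{k\<in>{1..n+1}. k \<le> j}. p k)"
    by (rule sum.inter_filter[symmetric]) simp
  also have "{k\<in>{1..n+1}. k \<le> j} = {1..j}" using assms by auto
  finally show ?thesis .
qed

lemma Aset_finite: "finite (Aset n)"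
proof -
  have "Aset n = (\<lambda>k. real k / real (n+1)) ` {..n+1}" unfolding Aset_def by auto
  then show ?thesis by simp
qed

lemma Quant_in_Aset: "Quant n \<alpha> p \<in> Aset n" if "0 \<le> \<alpha>"
proof -
  have "0 \<in> {a \<in> Aset n. cdf n p a \<le> \<alpha>}"
  proof -
    have "cdf n p (real 0 / real (n+1)) = 0" using cdf_grid[of 0 n p] by simp
    moreover have "(0::real) \<in> Aset n" unfolding Aset_def by (auto intro!: exI[of _ 0])
    ultimately show ?thesis using that by simp
  qed
  then have "Quant n \<alpha> p \<in> {a \<in> Aset n. cdf n p a \<le> \<alpha>}"
    unfolding Quant_def by (intro Max_in) (use Aset_finite in auto)
  then show ?thesis by simp
qed

lemma Aset_LebC_bound:
  assumes "a \<in> Aset n"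
  shows "\<bar>LebC n s a\<bar> \<le> 2 * (\<Sum>i\<le>n+1. \<bar>s i\<bar>)"
proof -
  obtain k where k: "k \<le> n+1" "a = real k / real (n+1)" using assms unfolding Aset_def by auto
  have "real (n+1) * (1 - a) = real (n + 1 - k)" using k by (simp add: field_simps of_nat_diff)
  then have idx: "nat \<lceil>real (n + 1) * (1 - a)\<rceil> = n + 1 - k" by simp
  have "\<bar>s (n+1-k)\<bar> \<le> (\<Sum>i\<le>n+1. \<bar>s i\<bar>)"
    by (rule member_le_sum[where f="\<lambda>i. \<bar>s i\<bar>"]) auto
  then show ?thesis unfolding LebC_def idx by simp
qed

lemma Quant_near:
  fixes \<alpha> \<epsilon> :: real and p :: "nat \<Rightarrow> real" and n :: nat
  defines "N \<equiv> real (n+1)"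
  defines "j \<equiv> nat \<lfloor>N * \<alpha>\<rfloor>"
  assumes a0: "0 < \<alpha>" and a1: "\<alpha> < 1"
    and close: "\<forall>k\<in>{1..n+1}. \<bar>p k - 1 / N\<bar> \<le> \<epsilon>"
    and eps1: "N * \<epsilon> < \<alpha> - real j / N" and eps2: "N * \<epsilon> < real (j+1) / N - \<alpha>"
  shows "Quant n \<alpha> p = real j / N"
proof -
  have Npos: "N > 0" unfolding N_def by simp
  have sum_close: "\<bar>(\<Sum>k=1..i. p k) - real i / N\<bar> \<le> N * \<epsilon>" if "i \<le> n+1" for i
  proof -
    have "(\<Sum>k=1..i. p k) - real i / N = (\<Sum>k=1..i. p k - 1 / N)"
      by (simp add: sum_subtractf)
    then have "\<bar>(\<Sum>k=1..i. p k) - real i / N\<bar> \<le> (\<Sum>k=1..i. \<bar>p k - 1 / N\<bar>)"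
      using sum_abs by metis
    also have "\<dots> \<le> (\<Sum>k=1..i. \<epsilon>)" by (rule sum_mono) (use close that in auto)
    also have "\<dots> = real i * \<epsilon>" by simp
    also have "\<dots> \<le> N * \<epsilon>"
    proof (rule mult_right_mono)
      show "real i \<le> N" using that unfolding N_def by simp
      show "0 \<le> \<epsilon>" using close[rule_format, of 1] by auto
    qed
    finally show ?thesis .
  qed
  have jle: "j \<le> n+1"
  proof -
    have "N * \<alpha> \<le> N" using a1 Npos by simp
    moreover have "real_of_int \<lfloor>N * \<alpha>\<rfloor> \<le> N * \<alpha>" by (rule of_int_floor_le)
    ultimately have "real_of_int \<lfloor>N * \<alpha>\<rfloor> \<le> N" by linarith
    then have "real_of_int \<lfloor>N * \<alpha>\<rfloor> \<le> real_of_int (int (n+1))" unfolding N_def by simp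
    then have "\<lfloor>N * \<alpha>\<rfloor> \<le> int (n+1)" by (simp only: of_int_le_iff)
    then show ?thesis unfolding j_def by simp
  qed
  let ?S = "{a \<in> Aset n. cdf n p a \<le> \<alpha>}"
  show ?thesis unfolding Quant_def
  proof (rule Max_eqI)
    show "finite ?S" using Aset_finite by simp
    show "real j / N \<in> ?S"
    proof -
      have "real j / N \<in> Aset n" unfolding Aset_def N_def using jle by auto
      moreover have "cdf n p (real j / N) \<le> \<alpha>"
        using cdf_grid[OF jle, of p] sum_close[OF jle] eps1 unfolding N_def by linarith
      ultimately show ?thesis by simp
    qed
    fix a assume "a \<in> ?S"
    then obtain i where i: "i \<le> n+1" "a = real i / N" and c: "cdf n p a \<le> \<alpha>"
      unfolding Aset_def N_def by auto
    show "a \<le> real j / N"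
    proof (rule ccontr)
      assume "\<not> a \<le> real j / N"
      then have "real j < real i" using i Npos by (auto simp: divide_le_cancel)
      then have "j < i" by simp
      then have "real (j+1) / N \<le> real i / N" using Npos by (simp add: divide_right_mono)
      moreover have "cdf n p a \<ge> real i / N - N * \<epsilon>"
        using cdf_grid[OF i(1), of p] sum_close[OF i(1)] i(2) unfolding N_def by auto
      ultimately show False using c eps2 by linarith
    qed
  qed
qed

lemma floor_facts:
  fixes \<alpha> :: real and n :: nat and s :: "nat \<Rightarrow> real"
  defines "N \<equiv> real (n+1)"
  defines "j \<equiv> nat \<lfloor>N * \<alpha>\<rfloor>"
  assumes a0: "0 < \<alpha>" and a1: "\<alpha> < 1" and na: "\<alpha> \<notin> Aset n"
  shows "real j / N < \<alpha>" "\<alpha> < real (j+1) / N" "j \<le> n"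
    and "rfun n \<alpha> = real j / N" "LebC n s \<alpha> = LebC n s (real j / N)"
proof -
  have Npos: "N > 0" unfolding N_def by simp
  have fl0: "0 \<le> \<lfloor>N * \<alpha>\<rfloor>" using a0 Npos by simp
  then have jr: "real j = of_int \<lfloor>N * \<alpha>\<rfloor>" unfolding j_def by simp
  have "real j \<le> N * \<alpha>" using jr by simp
  moreover have "real j \<noteq> N * \<alpha>"
  proof
    assume h: "real j = N * \<alpha>"
    have "j \<le> n + 1"
    proof -
      have "N * \<alpha> < N" using a1 Npos by simp
      then show ?thesis using h unfolding N_def by linarith
    qed
    moreover have "\<alpha> = real j / real (n+1)" using h Npos unfolding N_def by (simp add: field_simps)
    ultimately have "\<alpha> \<in> Aset n" unfolding Aset_def by auto
    then show False using na by simp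
  qed
  ultimately have jlt: "real j < N * \<alpha>" by simp
  then show "real j / N < \<alpha>" using Npos by (simp add: field_simps)
  have "N * \<alpha> < real j + 1" using jr by linarith
  then show "\<alpha> < real (j+1) / N" using Npos by (simp add: field_simps)
  have "N * \<alpha> < N" using a1 Npos by simp
  then have jn: "real j < N" using jlt by linarith
  then show "j \<le> n" unfolding N_def by simp
  have c1: "\<lceil>real (n + 1) * (1 - \<alpha>)\<rceil> = int (n + 1 - j)"
  proof -
    have "real (n + 1) * (1 - \<alpha>) = - (N * \<alpha>) + of_int (int (n+1))" unfolding N_def by (simp add: algebra_simps)
    then have "\<lceil>real (n + 1) * (1 - \<alpha>)\<rceil> = - \<lfloor>N * \<alpha>\<rfloor> + int (n+1)"
      by (simp only: ceiling_add_of_int ceiling_minus)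
    then show ?thesis using jr jn fl0 unfolding N_def j_def by simp
  qed
  have c2: "\<lceil>real (n + 1) * (1 - real j / N)\<rceil> = int (n + 1 - j)"
  proof -
    have "real (n + 1) * (1 - real j / N) = real (n + 1 - j)"
      using jn Npos unfolding N_def by (simp add: field_simps of_nat_diff)
    then show ?thesis by simp
  qed
  show "rfun n \<alpha> = real j / N"
    unfolding rfun_def c1 using jn unfolding N_def by (simp add: field_simps of_nat_diff)
  show "LebC n s \<alpha> = LebC n s (real j / N)" unfolding LebC_def c1 c2 ..
qed



definition avg :: "(nat \<Rightarrow> real) \<Rightarrow> nat \<Rightarrow> real" where
  "avg f T = (1 / real T) * (\<Sum>t=1..T. f t)"

lemma avg_add: "avg (\<lambda>t. f t + g t) T = avg f T + avg g T"
  unfolding avg_def by (simp add: sum.distrib algebra_simps)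

lemma avg_diff: "avg (\<lambda>t. f t - g t) T = avg f T - avg g T"
  unfolding avg_def by (simp add: sum_subtractf algebra_simps)

lemma avg_cmult: "avg (\<lambda>t. c * f t) T = c * avg f T"
  unfolding avg_def by (simp add: sum_distrib_left algebra_simps)

lemma avg_sum: "finite K \<Longrightarrow> avg (\<lambda>t. \<Sum>k\<in>K. f k t) T = (\<Sum>k\<in>K. avg (f k) T)"
  unfolding avg_def by (simp add: sum.swap[of _ K] sum_distrib_left)

lemma avg_cong: "(\<And>t. 1 \<le> t \<Longrightarrow> f t = g t) \<Longrightarrow> avg f T = avg g T"
  unfolding avg_def by (intro arg_cong[where f="\<lambda>x. _ * x"] sum.cong) auto

lemma avg_const_lim: "(\<lambda>T. avg (\<lambda>t. c) T) \<longlonglongrightarrow> c"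
proof (rule Lim_transform_eventually[OF tendsto_const])
  show "\<forall>\<^sub>F T in sequentially. c = avg (\<lambda>t. c) T"
    using eventually_ge_at_top[of "1::nat"] by eventually_elim (simp add: avg_def)
qed

lemma avg_abs_le: "(\<And>t. 1 \<le> t \<Longrightarrow> \<bar>f t\<bar> \<le> g t) \<Longrightarrow> \<bar>avg f T\<bar> \<le> avg g T"
proof -
  assume h: "\<And>t. 1 \<le> t \<Longrightarrow> \<bar>f t\<bar> \<le> g t"
  have "\<bar>\<Sum>t=1..T. f t\<bar> \<le> (\<Sum>t=1..T. \<bar>f t\<bar>)" by (rule sum_abs)
  also have "\<dots> \<le> (\<Sum>t=1..T. g t)" by (rule sum_mono) (use h in auto)
  finally have "\<bar>\<Sum>t=1..T. f t\<bar> \<le> (\<Sum>t=1..T. g t)" .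
  then show ?thesis unfolding avg_def by (simp add: abs_mult divide_right_mono)
qed

lemma avg_cmp: "(\<And>t. 1 \<le> t \<Longrightarrow> \<bar>f t\<bar> \<le> g t) \<Longrightarrow> (\<lambda>T. avg g T) \<longlonglongrightarrow> 0 \<Longrightarrow> (\<lambda>T. avg f T) \<longlonglongrightarrow> 0"
proof -
  assume h: "\<And>t. 1 \<le> t \<Longrightarrow> \<bar>f t\<bar> \<le> g t" and l: "(\<lambda>T. avg g T) \<longlonglongrightarrow> 0"
  show ?thesis
    by (rule Lim_null_comparison[where g="\<lambda>T. avg g T", OF _ l]) (use avg_abs_le[OF h] in auto)
qed

lemma eucl_d_ge:
  assumes "k \<in> {1..n+1}"
  shows "\<bar>p k - q k\<bar> \<le> eucl_d n p q"
proof -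
  have "(p k - q k)\<^sup>2 \<le> (\<Sum>i=1..n + 1. (p i - q i)\<^sup>2)"
    by (rule member_le_sum[where f="\<lambda>i. (p i - q i)\<^sup>2"]) (use assms in auto)
  then have "sqrt ((p k - q k)\<^sup>2) \<le> eucl_d n p q" unfolding eucl_d_def by (rule real_sqrt_le_mono)
  then show ?thesis by simp
qed

lemma bval_inj: "bval n k = bval n k' \<Longrightarrow> k = k'"
  unfolding bval_def by (simp add: divide_cancel_right)

lemma ind_B_sum:
  assumes "x \<in> Bset n"
  shows "(if x \<le> a then 1 else 0) = (\<Sum>k=1..n+1. dirac_vec n x k * (if bval n k \<le> a then 1 else (0::real)))"
proof -
  obtain k0 where k0: "k0 \<in> {1..n+1}" "x = bval n k0" using assms unfolding Bset_def by auto
  have "(\<Sum>k=1..n+1. dirac_vec n x k * (if bval n k \<le> a then 1 else (0::real))) =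
        (\<Sum>k=1..n+1. if k = k0 then (if bval n k \<le> a then 1 else (0::real)) else 0)"
    by (rule sum.cong) (use k0 bval_inj[of n] in \<open>auto simp: dirac_vec_def\<close>)
  also have "\<dots> = (if bval n k0 \<le> a then 1 else 0)" using k0 by simp
  finally show ?thesis using k0 by simp
qed



definition Hs :: "nat \<Rightarrow> real \<Rightarrow> nat \<Rightarrow> nat \<Rightarrow> (nat \<Rightarrow> real) set" where
  "Hs n \<epsilon> k \<sigma> = (if \<sigma> = 0 then UNIV
      else if \<sigma> = 1 then {p. 1 / real (n+1) + \<epsilon> \<le> p k} else {p. p k \<le> 1 / real (n+1) - \<epsilon>})"

lemma pathwise:
  fixes n :: nat and \<alpha> \<epsilon> :: real and s :: "nat \<Rightarrow> real"
    and Q Z :: "nat \<Rightarrow> nat \<Rightarrow> real" and B :: "nat \<Rightarrow> real"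
  defines "N \<equiv> real (n+1)"
  defines "j \<equiv> nat \<lfloor>N * \<alpha>\<rfloor>"
  assumes a0: "0 < \<alpha>" and a1: "\<alpha> < 1" and na: "\<alpha> \<notin> Aset n"
    and eps0: "0 < \<epsilon>" and eps1: "N * \<epsilon> < \<alpha> - real j / N" and eps2: "N * \<epsilon> < real (j+1) / N - \<alpha>"
    and BB: "\<forall>t\<ge>1. B t \<in> Bset n"
    and hyp: "(\<lambda>T. (1 / real T) * (\<Sum>t=1..T. eucl_d n (Q t) (qunif n))) \<longlonglongrightarrow> 0"
    and lln: "\<forall>k\<in>{1..n+1}. \<forall>\<sigma>\<in>{0,1,2}. (\<lambda>T. (1 / real T) * (\<Sum>t=1..T.
                 indicator (Hs n \<epsilon> k \<sigma>) (Z t) * (dirac_vec n (B t) k - Q t k))) \<longlonglongrightarrow> 0"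
    and cal: "\<forall>k\<in>{1..n+1}. \<forall>\<sigma>\<in>{1,2}. (\<lambda>T. (1 / real T) * (\<Sum>t=1..T.
                 indicator (Hs n \<epsilon> k \<sigma>) (Z t) * (dirac_vec n (B t) k - Z t k))) \<longlonglongrightarrow> 0"
  shows "(\<lambda>T. (1 / real T) *\<^sub>R (\<Sum>t=1..T. payoff n s (boaci n \<alpha> Z t) (B t)))
           \<longlonglongrightarrow> (rfun n \<alpha>, LebC n s \<alpha>)"
proof -
  define u where "u = 1 / N"
  have Npos: "N > 0" unfolding N_def by simp
  have qu: "qunif n k = u" if "k \<in> {1..n+1}" for k using that unfolding qunif_def u_def N_def by simp
  have Hs_u: "Hs n \<epsilon> k \<sigma> = (if \<sigma> = 0 then UNIV else if \<sigma> = 1 then {p. u + \<epsilon> \<le> p k} else {p. p k \<le> u - \<epsilon>})" for k \<sigma>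
    unfolding Hs_def u_def N_def ..
  define ind where "ind k \<sigma> t = (indicator (Hs n \<epsilon> k \<sigma>) (Z t) :: real)" for k \<sigma> t
  have ind01: "0 \<le> ind k \<sigma> t" "ind k \<sigma> t \<le> 1" for k \<sigma> t unfolding ind_def by (auto simp: indicator_def)
  have lln': "(\<lambda>T. avg (\<lambda>t. ind k \<sigma> t * (dirac_vec n (B t) k - Q t k)) T) \<longlonglongrightarrow> 0"
    if "k \<in> {1..n+1}" "\<sigma> \<in> {0,1,2}" for k \<sigma>
    using lln that unfolding avg_def ind_def by auto
  have cal': "(\<lambda>T. avg (\<lambda>t. ind k \<sigma> t * (dirac_vec n (B t) k - Z t k)) T) \<longlonglongrightarrow> 0"
    if "k \<in> {1..n+1}" "\<sigma> \<in> {1,2}" for k \<sigma>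
    using cal that unfolding avg_def ind_def by auto
  have hyp': "(\<lambda>T. avg (\<lambda>t. eucl_d n (Q t) (qunif n)) T) \<longlonglongrightarrow> 0"
    using hyp unfolding avg_def .
  have qdev: "(\<lambda>T. avg (\<lambda>t. ind k \<sigma> t * (Q t k - u)) T) \<longlonglongrightarrow> 0" if k: "k \<in> {1..n+1}" for k \<sigma>
  proof (rule avg_cmp[OF _ hyp'])
    fix t :: nat
    have "\<bar>Q t k - u\<bar> \<le> eucl_d n (Q t) (qunif n)" using eucl_d_ge[OF k, of "Q t" "qunif n"] qu[OF k] by simp
    then show "\<bar>ind k \<sigma> t * (Q t k - u)\<bar> \<le> eucl_d n (Q t) (qunif n)"
    proof -
      have "\<bar>ind k \<sigma> t * (Q t k - u)\<bar> = ind k \<sigma> t * \<bar>Q t k - u\<bar>" using ind01[of k \<sigma> t] by (simp add: abs_mult)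
      also have "\<dots> \<le> 1 * \<bar>Q t k - u\<bar>" by (rule mult_right_mono) (use ind01[of k \<sigma> t] in auto)
      also have "\<dots> = \<bar>Q t k - u\<bar>" by simp
      also have "\<dots> \<le> eucl_d n (Q t) (qunif n)" by fact
      finally show ?thesis .
    qed
  qed
  have zdev: "(\<lambda>T. avg (\<lambda>t. ind k \<sigma> t * (Z t k - u)) T) \<longlonglongrightarrow> 0"
    if k: "k \<in> {1..n+1}" and \<sigma>: "\<sigma> \<in> {1,2}" for k \<sigma>
  proof -
    have e: "ind k \<sigma> t * (Z t k - u) = ind k \<sigma> t * (dirac_vec n (B t) k - Q t k)
              - ind k \<sigma> t * (dirac_vec n (B t) k - Z t k) + ind k \<sigma> t * (Q t k - u)" for t
      by (simp add: algebra_simps)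
    have "(\<lambda>T. avg (\<lambda>t. ind k \<sigma> t * (dirac_vec n (B t) k - Q t k)) T
              - avg (\<lambda>t. ind k \<sigma> t * (dirac_vec n (B t) k - Z t k)) T
              + avg (\<lambda>t. ind k \<sigma> t * (Q t k - u)) T) \<longlonglongrightarrow> 0 - 0 + 0"
      using lln'[OF k] cal'[OF k \<sigma>] qdev[OF k] \<sigma> by (intro tendsto_intros) auto
    then show ?thesis unfolding e avg_add avg_diff by simp
  qed
  have freq: "(\<lambda>T. avg (ind k \<sigma>) T) \<longlonglongrightarrow> 0" if k: "k \<in> {1..n+1}" and \<sigma>: "\<sigma> \<in> {1,2}" for k \<sigma>
  proof (rule Lim_null_comparison)
    show "(\<lambda>T. \<bar>avg (\<lambda>t. ind k \<sigma> t * (Z t k - u)) T\<bar> / \<epsilon>) \<longlonglongrightarrow> 0"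
      using tendsto_divide[OF tendsto_rabs[OF zdev[OF k \<sigma>]] tendsto_const[of \<epsilon>]] eps0 by simp
    define c :: real where "c = (if \<sigma> = 1 then 1 else -1)"
    have pt: "\<epsilon> * ind k \<sigma> t \<le> c * (ind k \<sigma> t * (Z t k - u))" for t
      using \<sigma> eps0 unfolding ind_def c_def Hs_u by (auto simp: indicator_def)
    show "\<forall>\<^sub>F T in sequentially. norm (avg (ind k \<sigma>) T) \<le> \<bar>avg (\<lambda>t. ind k \<sigma> t * (Z t k - u)) T\<bar> / \<epsilon>"
    proof (intro always_eventually allI)
      fix T
      have "0 \<le> (\<Sum>t=1..T. ind k \<sigma> t)" using ind01 by (auto intro!: sum_nonneg)
      then have nn: "0 \<le> avg (ind k \<sigma>) T" unfolding avg_def by simp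
      have "\<epsilon> * avg (ind k \<sigma>) T = avg (\<lambda>t. \<epsilon> * ind k \<sigma> t) T" by (simp add: avg_cmult)
      also have "\<dots> \<le> avg (\<lambda>t. c * (ind k \<sigma> t * (Z t k - u))) T"
        unfolding avg_def by (intro mult_left_mono sum_mono pt) auto
      also have "\<dots> = c * avg (\<lambda>t. ind k \<sigma> t * (Z t k - u)) T" by (rule avg_cmult)
      also have "\<dots> \<le> \<bar>avg (\<lambda>t. ind k \<sigma> t * (Z t k - u)) T\<bar>" unfolding c_def by auto
      finally show "norm (avg (ind k \<sigma>) T) \<le> \<bar>avg (\<lambda>t. ind k \<sigma> t * (Z t k - u)) T\<bar> / \<epsilon>"
        using nn eps0 by (simp add: field_simps)
    qed
  qed
  define bad where "bad t = (if (\<exists>k\<in>{1..n+1}. \<epsilon> < \<bar>Z t k - u\<bar>) then 1 else (0::real))" for t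
  have bad01: "0 \<le> bad t" "bad t \<le> 1" for t unfolding bad_def by auto
  have bad_le: "\<bar>bad t\<bar> \<le> (\<Sum>k=1..n+1. \<Sum>\<sigma>\<in>{1,2}. ind k \<sigma> t)" for t
  proof (cases "\<exists>k\<in>{1..n+1}. \<epsilon> < \<bar>Z t k - u\<bar>")
    case True
    then obtain k where k: "k \<in> {1..n+1}" "\<epsilon> < \<bar>Z t k - u\<bar>" by blast
    have two: "(\<Sum>\<sigma>\<in>{1,2::nat}. ind k \<sigma> t) = ind k 1 t + ind k 2 t" by simp
    have "1 \<le> ind k 1 t + ind k 2 t"
      using k unfolding ind_def Hs_u by (auto simp: indicator_def abs_real_def split: if_splits)
    then have "1 \<le> (\<Sum>\<sigma>\<in>{1,2::nat}. ind k \<sigma> t)" unfolding two .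
    also have "\<dots> \<le> (\<Sum>k=1..n+1. \<Sum>\<sigma>\<in>{1,2}. ind k \<sigma> t)"
      by (rule member_le_sum[where f="\<lambda>k. \<Sum>\<sigma>\<in>{1,2}. ind k \<sigma> t"]) (use k ind01 in \<open>auto intro: sum_nonneg\<close>)
    finally show ?thesis unfolding bad_def using True by simp
  next
    case False
    have "0 \<le> (\<Sum>k=1..n+1. \<Sum>\<sigma>\<in>{1,2::nat}. ind k \<sigma> t)"
      by (intro sum_nonneg) (rule ind01)
    then show ?thesis unfolding bad_def using False by simp
  qed
  have badlim: "(\<lambda>T. avg bad T) \<longlonglongrightarrow> 0"
  proof (rule avg_cmp[OF bad_le])
    have "(\<lambda>T. \<Sum>k=1..n+1. \<Sum>\<sigma>\<in>{1,2}. avg (ind k \<sigma>) T) \<longlonglongrightarrow> 0"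
      using freq by (intro tendsto_null_sum) auto
    moreover have "avg (\<lambda>t. \<Sum>k=1..n+1. \<Sum>\<sigma>\<in>{1,2}. ind k \<sigma> t) T = (\<Sum>k=1..n+1. \<Sum>\<sigma>\<in>{1,2}. avg (ind k \<sigma>) T)" for T
    proof -
      have "avg (\<lambda>t. \<Sum>k=1..n+1. \<Sum>\<sigma>\<in>{1,2}. ind k \<sigma> t) T = (\<Sum>k=1..n+1. avg (\<lambda>t. \<Sum>\<sigma>\<in>{1,2}. ind k \<sigma> t) T)"
        by (rule avg_sum) simp
      also have "\<dots> = (\<Sum>k=1..n+1. \<Sum>\<sigma>\<in>{1,2}. avg (\<lambda>t. ind k \<sigma> t) T)"
        by (intro sum.cong refl avg_sum) simp
      finally show ?thesis by simp
    qed
    ultimately show "(\<lambda>T. avg (\<lambda>t. \<Sum>k=1..n+1. \<Sum>\<sigma>\<in>{1,2}. ind k \<sigma> t) T) \<longlonglongrightarrow> 0"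
      by presburger
  qed
  define astar where "astar = real j / N"
  have ff: "real j / N < \<alpha>" "\<alpha> < real (j+1) / N" "j \<le> n"
    "rfun n \<alpha> = real j / N" "LebC n s \<alpha> = LebC n s (real j / N)"
    using floor_facts[OF a0 a1 na] unfolding N_def j_def by auto
  have Qn: "Quant n \<alpha> p = astar" if "\<forall>k\<in>{1..n+1}. \<bar>p k - 1 / N\<bar> \<le> \<epsilon>" for p
    using Quant_near[of \<alpha> n p \<epsilon>] a0 a1 that eps1 eps2 unfolding astar_def N_def j_def by auto
  have act: "boaci n \<alpha> Z t = astar \<or> bad t = 1" if "1 \<le> t" for t
  proof (cases "t \<le> 1")
    case True
    have "Quant n \<alpha> (qunif n) = astar"
      by (rule Qn) (use eps0 qu in \<open>auto simp: u_def\<close>)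
    then show ?thesis unfolding boaci_def using True by simp
  next
    case False
    show ?thesis
    proof (cases "\<exists>k\<in>{1..n+1}. \<epsilon> < \<bar>Z t k - u\<bar>")
      case True then show ?thesis unfolding bad_def by simp
    next
      case nb: False
      have "Quant n \<alpha> (Z t) = astar" by (rule Qn) (use nb in \<open>auto simp: u_def not_less\<close>)
      then show ?thesis unfolding boaci_def using False by simp
    qed
  qed
  define Bd where "Bd = 2 * (\<Sum>i\<le>n+1. \<bar>s i\<bar>)"
  have astarA: "astar \<in> Aset n" unfolding astar_def Aset_def N_def using ff(3) by auto
  have actA: "boaci n \<alpha> Z t \<in> Aset n" for t
    unfolding boaci_def using Quant_in_Aset a0 by auto
  define cc where "cc k = (if bval n k \<le> astar then 1 else (0::real))" for k
  have dlim: "(\<lambda>T. avg (\<lambda>t. dirac_vec n (B t) k) T) \<longlonglongrightarrow> u" if k: "k \<in> {1..n+1}" for k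
  proof -
    have "(\<lambda>T. avg (\<lambda>t. ind k 0 t * (dirac_vec n (B t) k - Q t k)) T
              + avg (\<lambda>t. ind k 0 t * (Q t k - u)) T + avg (\<lambda>t. u) T) \<longlonglongrightarrow> 0 + 0 + u"
      using lln'[OF k] qdev[OF k] avg_const_lim by (intro tendsto_intros) auto
    moreover have "ind k 0 t = 1" for t unfolding ind_def Hs_def by simp
    ultimately show ?thesis by (simp add: avg_add[symmetric] algebra_simps)
  qed
  have fst_star: "(\<lambda>T. avg (\<lambda>t. fst (payoff n s astar (B t))) T) \<longlonglongrightarrow> rfun n \<alpha>"
  proof -
    have "(\<lambda>T. \<Sum>k=1..n+1. cc k * avg (\<lambda>t. dirac_vec n (B t) k) T) \<longlonglongrightarrow> (\<Sum>k=1..n+1. cc k * u)"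
      using dlim by (intro tendsto_sum tendsto_mult tendsto_const) auto
    moreover have "avg (\<lambda>t. fst (payoff n s astar (B t))) T = (\<Sum>k=1..n+1. cc k * avg (\<lambda>t. dirac_vec n (B t) k) T)" for T
    proof -
      have "avg (\<lambda>t. fst (payoff n s astar (B t))) T = avg (\<lambda>t. \<Sum>k=1..n+1. cc k * dirac_vec n (B t) k) T"
        by (rule avg_cong) (use BB ind_B_sum in \<open>auto simp: payoff_def cc_def mult.commute\<close>)
      also have "\<dots> = (\<Sum>k=1..n+1. avg (\<lambda>t. cc k * dirac_vec n (B t) k) T)"
        by (rule avg_sum) simp
      also have "\<dots> = (\<Sum>k=1..n+1. cc k * avg (\<lambda>t. dirac_vec n (B t) k) T)"
        by (intro sum.cong refl avg_cmult)
      finally show ?thesis .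
    qed
    moreover have "(\<Sum>k=1..n+1. cc k * u) = rfun n \<alpha>"
    proof -
      have "(\<Sum>k=1..n+1. cc k * u) = cdf n (qunif n) astar"
        unfolding cdf_def cc_def by (rule sum.cong) (use qu in auto)
      also have "\<dots> = (\<Sum>k=1..j. qunif n k)" unfolding astar_def N_def using ff(3) by (intro cdf_grid) simp
      also have "\<dots> = (\<Sum>k=1..j. u)" by (rule sum.cong) (use qu ff(3) in auto)
      also have "\<dots> = rfun n \<alpha>" using ff(4) unfolding u_def by simp
      finally show ?thesis .
    qed
    ultimately show ?thesis by simp
  qed
  have fst_lim: "(\<lambda>T. avg (\<lambda>t. fst (payoff n s (boaci n \<alpha> Z t) (B t))) T) \<longlonglongrightarrow> rfun n \<alpha>"
  proof -
    have d: "(\<lambda>T. avg (\<lambda>t. fst (payoff n s (boaci n \<alpha> Z t) (B t)) - fst (payoff n s astar (B t))) T) \<longlonglongrightarrow> 0"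
    proof (rule avg_cmp[OF _ badlim])
      fix t :: nat assume "1 \<le> t"
      then show "\<bar>fst (payoff n s (boaci n \<alpha> Z t) (B t)) - fst (payoff n s astar (B t))\<bar> \<le> bad t"
        using act[of t] bad01[of t] by (auto simp: payoff_def)
    qed
    have "(\<lambda>T. avg (\<lambda>t. fst (payoff n s (boaci n \<alpha> Z t) (B t)) - fst (payoff n s astar (B t))) T
             + avg (\<lambda>t. fst (payoff n s astar (B t))) T) \<longlonglongrightarrow> 0 + rfun n \<alpha>"
      by (intro tendsto_add d fst_star)
    then show ?thesis by (simp add: avg_diff)
  qed
  have snd_lim: "(\<lambda>T. avg (\<lambda>t. snd (payoff n s (boaci n \<alpha> Z t) (B t))) T) \<longlonglongrightarrow> LebC n s \<alpha>"
  proof -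
    have d: "(\<lambda>T. avg (\<lambda>t. snd (payoff n s (boaci n \<alpha> Z t) (B t)) - LebC n s astar) T) \<longlonglongrightarrow> 0"
    proof (rule avg_cmp[where g="\<lambda>t. 2 * Bd * bad t"])
      fix t :: nat assume "1 \<le> t"
      have b1: "\<bar>LebC n s (boaci n \<alpha> Z t)\<bar> \<le> Bd" using Aset_LebC_bound[OF actA] unfolding Bd_def .
      have b2: "\<bar>LebC n s astar\<bar> \<le> Bd" using Aset_LebC_bound[OF astarA] unfolding Bd_def .
      show "\<bar>snd (payoff n s (boaci n \<alpha> Z t) (B t)) - LebC n s astar\<bar> \<le> 2 * Bd * bad t"
        using act[OF \<open>1 \<le> t\<close>] b1 b2 bad01[of t] abs_ge_zero[of "LebC n s astar"] by (auto simp: payoff_def)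
    next
      show "(\<lambda>T. avg (\<lambda>t. 2 * Bd * bad t) T) \<longlonglongrightarrow> 0"
        using tendsto_mult[OF tendsto_const[of "2 * Bd"] badlim] by (simp add: avg_cmult)
    qed
    have "(\<lambda>T. avg (\<lambda>t. snd (payoff n s (boaci n \<alpha> Z t) (B t)) - LebC n s astar) T
             + avg (\<lambda>t. LebC n s astar) T) \<longlonglongrightarrow> 0 + LebC n s astar"
      by (intro tendsto_add d avg_const_lim)
    then show ?thesis using ff(5) unfolding astar_def by (simp add: avg_diff)
  qed
  have eq: "(1 / real T) *\<^sub>R (\<Sum>t=1..T. payoff n s (boaci n \<alpha> Z t) (B t)) =
      (avg (\<lambda>t. fst (payoff n s (boaci n \<alpha> Z t) (B t))) T, avg (\<lambda>t. snd (payoff n s (boaci n \<alpha> Z t) (B t))) T)" for T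
    unfolding avg_def by (simp add: fst_sum snd_sum prod_eq_iff)
  show ?thesis unfolding eq by (intro tendsto_Pair fst_lim snd_lim)
qed



lemma Hs_borel: "Hs n \<epsilon> k \<sigma> \<in> sets (borel :: (nat \<Rightarrow> real) measure)"
proof -
  have "(\<lambda>p::nat\<Rightarrow>real. p k) -` A \<inter> space borel \<in> sets borel" if "A \<in> sets (borel :: real measure)" for A
    by (rule measurable_sets[OF measurable_product_coordinates that])
  from this[of "{c..}"] this[of "{..c}"]
  have "{p::nat\<Rightarrow>real. c \<le> p k} \<in> sets borel" "{p::nat\<Rightarrow>real. p k \<le> c} \<in> sets borel" for c
    by (auto simp: vimage_def)
  then show ?thesis unfolding Hs_def by auto
qed

theorem corollary2:
  fixes n :: nat and L :: real and s :: "nat \<Rightarrow> real" and \<alpha> :: real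
    and M :: "'w measure" and G :: "nat \<Rightarrow> 'w measure"
    and q z :: "nat \<Rightarrow> 'w \<Rightarrow> nat \<Rightarrow> real" and b :: "nat \<Rightarrow> 'w \<Rightarrow> real"
  assumes n: "n \<ge> 1" and L: "L > 0"
    and s0: "s 0 = 0" and sL: "s (n + 1) = L"
    and s_range: "\<forall>k\<in>{1..n}. 0 \<le> s k \<and> s k < L"
    and s_mono: "strict_mono_on {1..n} s"
    and alpha: "0 < \<alpha>" "\<alpha> < 1" "\<alpha> \<notin> Aset n"
    and P: "prob_space M"
    \<comment> \<open>G t: information available at round t just before b_t is drawn
        (past rounds, the opponent's choice q_t and the learner's round-t randomness)\<close>
    and G_sub: "\<forall>t. subalgebra M (G t)"
    and G_mono: "\<forall>t. sets (G t) \<subseteq> sets (G (Suc t))"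
    and q_meas: "\<forall>t\<ge>1. q t \<in> G t \<rightarrow>\<^sub>M borel"
    and z_meas: "\<forall>t\<ge>1. z t \<in> G t \<rightarrow>\<^sub>M borel"
    and b_meas: "\<forall>t\<ge>1. b t \<in> G (Suc t) \<rightarrow>\<^sub>M borel"
    and q_Delta: "\<forall>t\<ge>1. \<forall>\<omega>\<in>space M. q t \<omega> \<in> Delta n"
    and z_Delta: "\<forall>t\<ge>1. \<forall>\<omega>\<in>space M. z t \<omega> \<in> Delta n"
    and b_B: "\<forall>t\<ge>1. \<forall>\<omega>\<in>space M. b t \<omega> \<in> Bset n"
    \<comment> \<open>conditionally on G t, b_t is distributed according to q_t\<close>
    and b_law: "\<forall>t\<ge>1. \<forall>k\<in>{1..n + 1}. \<forall>E\<in>sets (G t).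
        measure M ({\<omega>\<in>space M. b t \<omega> = bval n k} \<inter> E) = (LINT \<omega>:E|M. q t \<omega> k)"
    \<comment> \<open>calibration of the forecaster (along this play)\<close>
    and calibrated: "\<forall>H\<in>sets (borel :: (nat \<Rightarrow> real) measure). \<forall>k\<in>{1..n + 1}.
        AE \<omega> in M. (\<lambda>T. (1 / real T) * (\<Sum>t=1..T. indicator H (z t \<omega>)
                          * (dirac_vec n (b t \<omega>) k - z t \<omega> k))) \<longlonglongrightarrow> 0"
  shows "(AE \<omega> in M.
           ((\<lambda>T. (1 / real T) * (\<Sum>t=1..T. eucl_d n (q t \<omega>) (qunif n))) \<longlonglongrightarrow> 0)
           \<longrightarrow> ((\<lambda>T. (1 / real T) *\<^sub>R (\<Sum>t=1..T. payoff n s (boaci n \<alpha> (\<lambda>t. z t \<omega>) t) (b t \<omega>)))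
                 \<longlonglongrightarrow> (rfun n \<alpha>, LebC n s \<alpha>)))
         \<and> (rfun n \<alpha>, LebC n s \<alpha>) = mstar n s \<alpha> (qunif n)"
proof -
  define N where "N = real (n+1)"
  define j where "j = nat \<lfloor>N * \<alpha>\<rfloor>"
  have Npos: "N > 0" unfolding N_def by simp
  have ff: "real j / N < \<alpha>" "\<alpha> < real (j+1) / N" "j \<le> n"
    "rfun n \<alpha> = real j / N" "LebC n s \<alpha> = LebC n s (real j / N)"
    using floor_facts[OF alpha] unfolding N_def j_def by auto
  define \<epsilon> where "\<epsilon> = min (\<alpha> - real j / N) (real (j+1) / N - \<alpha>) / (2 * N)"
  have eps0: "0 < \<epsilon>" unfolding \<epsilon>_def using ff Npos by auto
  have Neps: "N * \<epsilon> = min (\<alpha> - real j / N) (real (j+1) / N - \<alpha>) / 2"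
    unfolding \<epsilon>_def using Npos by (simp add: field_simps)
  have eps1: "N * \<epsilon> < \<alpha> - real j / N" and eps2: "N * \<epsilon> < real (j+1) / N - \<alpha>"
  proof -
    have a: "0 < \<alpha> - real j / N" and b: "0 < real (j+1) / N - \<alpha>" using ff by auto
    show "N * \<epsilon> < \<alpha> - real j / N" "N * \<epsilon> < real (j+1) / N - \<alpha>"
    proof -
      have g: "\<And>x y::real. 0 < x \<Longrightarrow> 0 < y \<Longrightarrow> min x y / 2 < x \<and> min x y / 2 < y"
        by (auto simp: min_def)
      show "N * \<epsilon> < \<alpha> - real j / N" "N * \<epsilon> < real (j+1) / N - \<alpha>"
        unfolding Neps using g[OF a b] by auto
    qed
  qed
  interpret prob_space M by (rule P)
  \<comment> \<open>strong law for the martingale differences\<close>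
  have lln: "AE \<omega> in M. (\<lambda>T. (1 / real T) * (\<Sum>t=1..T.
                 indicator (Hs n \<epsilon> k \<sigma>) (z t \<omega>) * (dirac_vec n (b t \<omega>) k - q t \<omega> k))) \<longlonglongrightarrow> 0"
    if k: "k \<in> {1..n+1}" for k \<sigma>
  proof -
    define X where "X \<equiv> \<lambda>t \<omega>. if 1 \<le> t then indicator (Hs n \<epsilon> k \<sigma>) (z t \<omega>) * (dirac_vec n (b t \<omega>) k - q t \<omega> k) else 0"
    note o = orth_X[OF P G_sub G_mono q_meas z_meas b_meas q_Delta b_law k Hs_borel[of n \<epsilon> k \<sigma>]]
    have "AE \<omega> in M. (\<lambda>T. (1 / real T) * (\<Sum>t=1..T. X t \<omega>)) \<longlonglongrightarrow> 0"
      by (rule slln_orth[OF P]) (use o in \<open>auto simp: X_def\<close>)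
    moreover have "(\<Sum>t=1..T. X t \<omega>) = (\<Sum>t=1..T. indicator (Hs n \<epsilon> k \<sigma>) (z t \<omega>) * (dirac_vec n (b t \<omega>) k - q t \<omega> k))" for T \<omega>
      by (rule sum.cong) (auto simp: X_def)
    ultimately show ?thesis by simp
  qed
  have lln_all: "AE \<omega> in M. \<forall>k\<in>{1..n+1}. \<forall>\<sigma>\<in>{0,1,2}. (\<lambda>T. (1 / real T) * (\<Sum>t=1..T.
                 indicator (Hs n \<epsilon> k \<sigma>) (z t \<omega>) * (dirac_vec n (b t \<omega>) k - q t \<omega> k))) \<longlonglongrightarrow> 0"
    by (intro AE_ball_countable' lln) auto
  have cal_all: "AE \<omega> in M. \<forall>k\<in>{1..n+1}. \<forall>\<sigma>\<in>{1,2}. (\<lambda>T. (1 / real T) * (\<Sum>t=1..T.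
                 indicator (Hs n \<epsilon> k \<sigma>) (z t \<omega>) * (dirac_vec n (b t \<omega>) k - z t \<omega> k))) \<longlonglongrightarrow> 0"
    using calibrated Hs_borel by (intro AE_ball_countable') auto
  have part1: "AE \<omega> in M.
           ((\<lambda>T. (1 / real T) * (\<Sum>t=1..T. eucl_d n (q t \<omega>) (qunif n))) \<longlonglongrightarrow> 0)
           \<longrightarrow> ((\<lambda>T. (1 / real T) *\<^sub>R (\<Sum>t=1..T. payoff n s (boaci n \<alpha> (\<lambda>t. z t \<omega>) t) (b t \<omega>)))
                 \<longlonglongrightarrow> (rfun n \<alpha>, LebC n s \<alpha>))"
    using lln_all cal_all AE_space
  proof eventually_elim
    case (elim \<omega>)
    show ?case
    proof
      assume hyp: "(\<lambda>T. (1 / real T) * (\<Sum>t=1..T. eucl_d n (q t \<omega>) (qunif n))) \<longlonglongrightarrow> 0"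
      show "(\<lambda>T. (1 / real T) *\<^sub>R (\<Sum>t=1..T. payoff n s (boaci n \<alpha> (\<lambda>t. z t \<omega>) t) (b t \<omega>)))
                 \<longlonglongrightarrow> (rfun n \<alpha>, LebC n s \<alpha>)"
      proof (rule pathwise[where Q="\<lambda>t. q t \<omega>" and \<epsilon>=\<epsilon>])
        show "\<forall>t\<ge>1. b t \<omega> \<in> Bset n" using b_B elim by auto
      qed (use alpha eps0 eps1 eps2 hyp elim in \<open>simp_all add: N_def j_def\<close>)
    qed
  qed
  have part2: "(rfun n \<alpha>, LebC n s \<alpha>) = mstar n s \<alpha> (qunif n)"
  proof -
    have Qu: "Quant n \<alpha> (qunif n) = real j / N"
      using Quant_near[of \<alpha> n "qunif n" 0] alpha ff unfolding N_def j_def qunif_def by auto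
    have "cdf n (qunif n) (real j / N) = (\<Sum>k=1..j. qunif n k)"
      unfolding N_def by (rule cdf_grid) (use ff in simp)
    also have "\<dots> = (\<Sum>k=1..j. 1 / N)" by (rule sum.cong) (use ff in \<open>auto simp: qunif_def N_def\<close>)
    also have "\<dots> = rfun n \<alpha>" using ff by simp
    finally show ?thesis unfolding mstar_def Qu using ff by simp
  qed
  show ?thesis using part1 part2 by simp
qed


end
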